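(* Consider the mining game with $N\ge2$ miners, costs $0<c_1\le\dots\le c_N$, reward $R>0$ and capacity $\gamma\ge0$, at parameter values where the number $n$ of active miners does not change under small perturbations of the parameters. Let $i\ne j$ be active miners. Then $$\frac{\partial h_i^*}{\partial c_i}=\Delta_{i,1}+\Delta_{i,2}<0,\qquad \frac{\partial h_i^*}{\partial c_j}=\Delta_{i,2},$$ where $\Delta_{i,1}<0$ and $\Delta_{i,2}>0\iff h_i^*/H^*<1/2$. Furthermore, $$\frac{\partial}{\partial c_i}\frac{h_i^*}{H^*}=\widetilde\Delta_{i,1}+\widetilde\Delta_{i,2}<0,\qquad \frac{\partial}{\partial c_j}\frac{h_i^*}{H^*}=\widetilde\Delta_{i,2}>0,$$ where $\widetilde\Delta_{i,1}<0$ and $\widetilde\Delta_{i,2}>0$.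
   Context: Mining game: $N\ge2$ miners with costs-per-hash $0<c_1\le\dots\le c_N$; each miner $i$ chooses $h_i\ge0$, $H=\sum_j h_j$, payoff $\frac{h_i}{H}R-c_ih_i-\frac{\gamma}{2}h_i^2$ if $H>0$ and $0$ if $H=0$, with $R>0$, $\gamma\ge0$. The pure Nash equilibrium $h^*$ is unique; its active miners (those with $h_i^*>0$) are $1,\dots,n$ for some $2\le n\le N$, and with $c^{(n)}=\sum_{i=1}^nc_i$ one has $H^*=g(c_1,\dots,c_n,\gamma,R):=\frac{\sqrt{(c^{(n)})^2+4(n-1)R\gamma}-c^{(n)}}{2\gamma}$ for $\gamma>0$ (and $(n-1)R/c^{(n)}$ for $\gamma=0$), and $h_i^*=f_i(c_i,\gamma,R,H^* )$ for $i\le n$, where $f_i(c,\gamma,R,x):=x\frac{R-cx}{R+\gamma x^2}$. Derivatives are taken of these closed-form expressions with $n$ held fixed. Definitions: $\Delta_{i,1}:=\frac{\partial f_i}{\partial c}(c_i,\gamma,R,H^* )$ (direct effect, fourth argument held fixed) and $\Delta_{i,2}:=\frac{\partial f_i}{\partial x}(c_i,\gamma,R,H^* )\cdot\frac{\partial g}{\partial c_i}$ (indirect effect through $H^*$; note $\partial g/\partial c_i=\partial g/\partial c_j$). Similarly, $\widetilde\Delta_{i,1}$ is the partial derivative of $f_i(c,\gamma,R,x)/x$ in $c$ with $x=H^*$ held fixed, and $\widetilde\Delta_{i,2}:=\frac{\partial}{\partial x}\big(f_i(c_i,\gamma,R,x)/x\big)\big|_{x=H^*}\cdot\frac{\partial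 g}{\partial c_i}$. *)

theory Defs
  imports "HOL-Analysis.Analysis"
begin

definition valid_params :: "nat \<Rightarrow> (nat \<Rightarrow> real) \<Rightarrow> real \<Rightarrow> real \<Rightarrow> bool" where
  "valid_params N c R \<gamma> \<longleftrightarrow> 2 \<le> N \<and> (\<forall>i\<in>{1..N}. 0 < c i) \<and>
     (\<forall>i j. 1 \<le> i \<longrightarrow> i \<le> j \<longrightarrow> j \<le> N \<longrightarrow> c i \<le> c j) \<and> 0 < R \<and> 0 \<le> \<gamma>"

definition payoff :: "nat \<Rightarrow> (nat \<Rightarrow> real) \<Rightarrow> real \<Rightarrow> real \<Rightarrow> (nat \<Rightarrow> real) \<Rightarrow> nat \<Rightarrow> real" where
  "payoff N c R \<gamma> h i =
     (let H = (\<Sum>j=1..N. h j) in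
      if H > 0 then h i / H * R - c i * h i - \<gamma> / 2 * (h i)\<^sup>2 else 0)"

definition is_NE :: "nat \<Rightarrow> (nat \<Rightarrow> real) \<Rightarrow> real \<Rightarrow> real \<Rightarrow> (nat \<Rightarrow> real) \<Rightarrow> bool" where
  "is_NE N c R \<gamma> h \<longleftrightarrow> (\<forall>i\<in>{1..N}. 0 \<le> h i) \<and>
     (\<forall>i\<in>{1..N}. \<forall>y\<ge>0. payoff N c R \<gamma> (h(i := y)) i \<le> payoff N c R \<gamma> h i)"

definition active_set :: "nat \<Rightarrow> (nat \<Rightarrow> real) \<Rightarrow> nat set" where
  "active_set N h = {i\<in>{1..N}. 0 < h i}"

text \<open>Closed form g of the aggregate hash rate with n active miners (costs c 1..c n).\<close>
definition gH :: "nat \<Rightarrow> (nat \<Rightarrow> real) \<Rightarrow> real \<Rightarrow> real \<Rightarrow> real" where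
  "gH n c \<gamma> R =
     (let S = (\<Sum>i=1..n. c i) in
      if \<gamma> = 0 then (real n - 1) * R / S
      else (sqrt (S\<^sup>2 + 4 * (real n - 1) * R * \<gamma>) - S) / (2 * \<gamma>))"

definition fh :: "real \<Rightarrow> real \<Rightarrow> real \<Rightarrow> real \<Rightarrow> real" where
  "fh c \<gamma> R x = x * (R - c * x) / (R + \<gamma> * x\<^sup>2)"

end

theory Submission
  imports Defs
begin

lemma sum_upd:
  assumes "finite A" "k \<in> A"
  shows "(\<Sum>i\<in>A. (c(k:=t)) i) = (\<Sum>i\<in>A. c i) - c k + (t::real)"
proof -
  have "(\<Sum>i\<in>A. (c(k:=t)) i) = t + (\<Sum>i\<in>A-{k}. (c(k:=t)) i)"
    using assms by (simp add: sum.remove)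
  also have "(\<Sum>i\<in>A-{k}. (c(k:=t)) i) = (\<Sum>i\<in>A-{k}. c i)" by (rule sum.cong) auto
  also have "(\<Sum>i\<in>A-{k}. c i) = (\<Sum>i\<in>A. c i) - c k" using assms by (simp add: sum_diff1)
  finally show ?thesis by simp
qed

lemma gH_deriv:
  fixes c :: "nat \<Rightarrow> real"
  assumes k: "k \<in> {1..n}" and S: "S = (\<Sum>i=1..n. c i)" and Sp: "S > 0" and g: "\<gamma> \<ge> 0" and R: "R > 0"
    and n: "n \<ge> 1"
  shows "((\<lambda>t. gH n (c(k:=t)) \<gamma> R) has_real_derivative (- gH n c \<gamma> R / (2*\<gamma>*gH n c \<gamma> R + S))) (at (c k))"
proof -
  have eq: "(\<lambda>t. gH n (c(k:=t)) \<gamma> R) = (\<lambda>t. if \<gamma> = 0 then (real n - 1) * R / (S - c k + t) else (sqrt ((S - c k + t)^2 + 4 * (real n - 1) * R * \<gamma>) - (S - c k + t)) / (2 * \<gamma>))"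
  proof -
    have h: "\<And>t. sum (c(k := t)) {1..n} = S - c k + t" using sum_upd[of "{1..n}" k c] k S by simp
    show ?thesis unfolding gH_def Let_def h by (rule refl)
  qed
  have eq0: "gH n c \<gamma> R = (if \<gamma> = 0 then (real n - 1) * R / S else (sqrt (S^2 + 4 * (real n - 1) * R * \<gamma>) - S) / (2 * \<gamma>))"
    using S unfolding gH_def Let_def by simp
  show ?thesis
  proof (cases "\<gamma> = 0")
    case True
    have "((\<lambda>t. (real n - 1) * R / (S - c k + t)) has_real_derivative (- gH n c \<gamma> R / (2*\<gamma>*gH n c \<gamma> R + S))) (at (c k))"
      using Sp True unfolding eq0 by (auto intro!: derivative_eq_intros simp: field_simps power2_eq_square)
    then show ?thesis unfolding eq using True by simp
  next
    case False
    have Q: "S^2 + 4 * (real n - 1) * R * \<gamma> > 0" using Sp g R n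
      by (smt (verit) mult_nonneg_nonneg of_nat_1 of_nat_mono zero_less_power)
    have sq: "sqrt (S^2 + 4 * (real n - 1) * R * \<gamma>) > 0" using Q by simp
    have "((\<lambda>t. (sqrt ((S - c k + t)^2 + 4 * (real n - 1) * R * \<gamma>) - (S - c k + t)) / (2 * \<gamma>)) has_real_derivative (- gH n c \<gamma> R / (2*\<gamma>*gH n c \<gamma> R + S))) (at (c k))"
      using Q Sp False sq unfolding eq0 by (auto intro!: derivative_eq_intros simp: field_simps power2_eq_square)
    then show ?thesis unfolding eq using False by simp
  qed
qed

lemma den_pos: "R > 0 \<Longrightarrow> \<gamma> \<ge> 0 \<Longrightarrow> R + \<gamma> * (x::real)^2 > 0"
  by (simp add: add_pos_nonneg)

lemma comp1:
  assumes X: "(X has_real_derivative g') (at a)" and Xa: "X a = x" and R: "R > 0" and g: "\<gamma> \<ge> 0"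
  shows "((\<lambda>t. fh t \<gamma> R (X t)) has_real_derivative (- (x^2)/(R+\<gamma>*x^2) + R*(R-\<gamma>*x^2-2*a*x)/(R+\<gamma>*x^2)^2 * g')) (at a)"
proof -
  have d: "R+\<gamma>*x^2 > 0" using den_pos[OF R g] .
  show ?thesis unfolding fh_def
    using X d unfolding Xa[symmetric] apply (auto intro!: derivative_eq_intros) apply (simp add: divide_simps) apply (simp add: algebra_simps power2_eq_square) done
qed

lemma comp2:
  assumes X: "(X has_real_derivative g') (at a)" and Xa: "X a = x" and R: "R > 0" and g: "\<gamma> \<ge> 0"
  shows "((\<lambda>t. fh c \<gamma> R (X t)) has_real_derivative (R*(R-\<gamma>*x^2-2*c*x)/(R+\<gamma>*x^2)^2 * g')) (at a)"
proof -
  have d: "R+\<gamma>*x^2 > 0" using den_pos[OF R g] .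
  show ?thesis unfolding fh_def
    using X d unfolding Xa[symmetric] apply (auto intro!: derivative_eq_intros) apply (simp add: divide_simps) apply (simp add: algebra_simps power2_eq_square) done
qed

lemma comp3:
  assumes X: "(X has_real_derivative g') (at a)" and Xa: "X a = x" and R: "R > 0" and g: "\<gamma> \<ge> 0" and x: "x \<noteq> 0"
  shows "((\<lambda>t. fh t \<gamma> R (X t) / X t) has_real_derivative (- x/(R+\<gamma>*x^2) + (- a*R + a*\<gamma>*x^2 - 2*R*\<gamma>*x)/(R+\<gamma>*x^2)^2 * g')) (at a)"
proof -
  have d: "R+\<gamma>*x^2 > 0" using den_pos[OF R g] .
  show ?thesis unfolding fh_def
    using X d x unfolding Xa[symmetric] apply (intro derivative_eq_intros) apply (rule X | rule refl | (simp; fail))+ apply (simp add: divide_simps) apply (simp add: algebra_simps power2_eq_square) done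
qed

lemma comp4:
  assumes X: "(X has_real_derivative g') (at a)" and Xa: "X a = x" and R: "R > 0" and g: "\<gamma> \<ge> 0" and x: "x \<noteq> 0"
  shows "((\<lambda>t. fh c \<gamma> R (X t) / X t) has_real_derivative ((- c*R + c*\<gamma>*x^2 - 2*R*\<gamma>*x)/(R+\<gamma>*x^2)^2 * g')) (at a)"
proof -
  have d: "R+\<gamma>*x^2 > 0" using den_pos[OF R g] .
  show ?thesis unfolding fh_def
    using X d x unfolding Xa[symmetric] apply (intro derivative_eq_intros) apply (rule X | rule refl | (simp; fail))+ apply (simp add: divide_simps) apply (simp add: algebra_simps power2_eq_square) done
qed

theorem proposition4p5:
  fixes N n i j :: nat and c h :: "nat \<Rightarrow> real" and R \<gamma> :: real
  assumes params: "valid_params N c R \<gamma>"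
    and NE: "is_NE N c R \<gamma> h"
    and active: "active_set N h = {1..n}"
    and stable: "\<exists>\<epsilon>>0. \<forall>c' R' \<gamma>'. valid_params N c' R' \<gamma>' \<and> (\<forall>k\<in>{1..N}. \<bar>c' k - c k\<bar> < \<epsilon>)
                   \<and> \<bar>R' - R\<bar> < \<epsilon> \<and> \<bar>\<gamma>' - \<gamma>\<bar> < \<epsilon> \<longrightarrow>
                   (\<forall>h'. is_NE N c' R' \<gamma>' h' \<longrightarrow> active_set N h' = {1..n})"
    and i: "i \<in> {1..n}" and j: "j \<in> {1..n}" and ij: "i \<noteq> j"
  defines "H \<equiv> gH n c \<gamma> R"
    and "D1 \<equiv> deriv (\<lambda>t. fh t \<gamma> R (gH n c \<gamma> R)) (c i)"
    and "D2 \<equiv> deriv (\<lambda>x. fh (c i) \<gamma> R x) (gH n c \<gamma> R) * deriv (\<lambda>t. gH n (c(i := t)) \<gamma> R) (c i)"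
    and "E1 \<equiv> deriv (\<lambda>t. fh t \<gamma> R (gH n c \<gamma> R) / gH n c \<gamma> R) (c i)"
    and "E2 \<equiv> deriv (\<lambda>x. fh (c i) \<gamma> R x / x) (gH n c \<gamma> R) * deriv (\<lambda>t. gH n (c(i := t)) \<gamma> R) (c i)"
  shows "((\<lambda>t. fh t \<gamma> R (gH n (c(i := t)) \<gamma> R)) has_real_derivative D1 + D2) (at (c i))
         \<and> D1 + D2 < 0
         \<and> ((\<lambda>t. fh (c i) \<gamma> R (gH n (c(j := t)) \<gamma> R)) has_real_derivative D2) (at (c j))
         \<and> D1 < 0
         \<and> (D2 > 0 \<longleftrightarrow> fh (c i) \<gamma> R H / H < 1 / 2)
         \<and> ((\<lambda>t. fh t \<gamma> R (gH n (c(i := t)) \<gamma> R) / gH n (c(i := t)) \<gamma> R)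
              has_real_derivative E1 + E2) (at (c i))
         \<and> E1 + E2 < 0
         \<and> ((\<lambda>t. fh (c i) \<gamma> R (gH n (c(j := t)) \<gamma> R) / gH n (c(j := t)) \<gamma> R)
              has_real_derivative E2) (at (c j))
         \<and> E2 > 0
         \<and> E1 < 0"
proof -
  from params have N2: "2 \<le> N" and cpos0: "\<forall>k\<in>{1..N}. 0 < c k" and R: "0 < R" and g: "0 \<le> \<gamma>"
    unfolding valid_params_def by auto
  from NE have hnn: "\<forall>k\<in>{1..N}. 0 \<le> h k"
    and NEopt: "\<forall>k\<in>{1..N}. \<forall>y\<ge>0. payoff N c R \<gamma> (h(k := y)) k \<le> payoff N c R \<gamma> h k"
    unfolding is_NE_def by auto
  have n2: "2 \<le> n" using i j ij by auto
  have nN: "n \<le> N"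
  proof -
    have "n \<in> active_set N h" using active n2 by auto
    then show ?thesis unfolding active_set_def by auto
  qed
  have cpos: "\<And>k. k \<in> {1..n} \<Longrightarrow> 0 < c k" using cpos0 nN by auto
  have hpos: "0 < h k" if k: "k \<in> {1..n}" for k
  proof -
    have "k \<in> active_set N h" using active k by simp
    then show ?thesis unfolding active_set_def by simp
  qed
  have hz: "h k = 0" if k: "k \<in> {1..N}" "k \<notin> {1..n}" for k
  proof -
    have "k \<notin> active_set N h" using active k by simp
    then have "\<not> 0 < h k" using k unfolding active_set_def by simp
    moreover have "0 \<le> h k" using hnn k(1) by blast
    ultimately show ?thesis by linarith
  qed
  define S where "S = (\<Sum>k=1..n. c k)"
  have Sij: "c i + c j \<le> S"
  proof -
    have "(\<Sum>k\<in>{i,j}. c k) \<le> S" unfolding S_def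
      by (rule sum_mono2) (use i j cpos in \<open>auto intro: less_imp_le\<close>)
    then show ?thesis using ij by simp
  qed
  have Sgt: "c i < S" using Sij cpos[OF j] by linarith
  have Sgtj: "c j < S" using Sij cpos[OF i] by linarith
  have Spos: "0 < S" using Sgt cpos[OF i] by linarith
  define Ht where "Ht = (\<Sum>k=1..N. h k)"
  have Ht_n: "Ht = (\<Sum>k=1..n. h k)" unfolding Ht_def
    by (rule sum.mono_neutral_right) (use nN hz in auto)
  have Ht_ge: "\<And>k m. k\<in>{1..n} \<Longrightarrow> m\<in>{1..n} \<Longrightarrow> k\<noteq>m \<Longrightarrow> h k + h m \<le> Ht"
  proof -
    fix k m assume km: "k\<in>{1..n}" "m\<in>{1..n}" "k\<noteq>m"
    have "(\<Sum>l\<in>{k,m}. h l) \<le> Ht" unfolding Ht_n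
      by (rule sum_mono2) (use km hpos in \<open>auto intro: less_imp_le\<close>)
    then show "h k + h m \<le> Ht" using km by simp
  qed
  have Htpos: "0 < Ht" using Ht_ge[OF i j ij] hpos[OF i] hpos[OF j] by linarith
  have foc: "h k * (R + \<gamma>*Ht^2) = Ht * (R - c k * Ht)" if k: "k \<in> {1..n}" for k
  proof -
    obtain m where m: "m \<in> {1..n}" "k \<noteq> m" using i j ij by (cases "k = i") auto
    define B where "B = Ht - h k"
    have Bpos: "B > 0" using Ht_ge[OF k m] hpos[OF m(1)] unfolding B_def by linarith
    have hk: "h k > 0" using hpos[OF k] .
    have kN: "k \<in> {1..N}" using k nN by auto
    define \<phi> where "\<phi> = (\<lambda>y. y/(B+y)*R - c k*y - \<gamma>/2*y^2)"
    have pay: "payoff N c R \<gamma> (h(k:=y)) k = \<phi> y" if y: "y > 0" for y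
    proof -
      have sm: "(\<Sum>j=1..N. (h(k:=y)) j) = B + y" using sum_upd[of "{1..N}" k h y] kN
        unfolding Ht_def B_def by simp
      show ?thesis unfolding payoff_def Let_def sm using Bpos y by (simp add: \<phi>_def)
    qed
    have pay0: "payoff N c R \<gamma> h k = \<phi> (h k)" using pay[OF hk] by simp
    have der: "(\<phi> has_real_derivative (R*B/(B+h k)^2 - c k - \<gamma>*h k)) (at (h k))"
      unfolding \<phi>_def using Bpos hk
      apply (intro derivative_eq_intros) apply (rule refl | (simp; fail))+
      apply (simp add: divide_simps) apply (simp add: algebra_simps power2_eq_square)
      done
    have z: "R*B/(B+h k)^2 - c k - \<gamma>*h k = 0"
    proof (rule DERIV_local_max[OF der hk], intro allI impI)
      fix y assume "\<bar>h k - y\<bar> < h k"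
      then have y: "y > 0" by linarith
      have "payoff N c R \<gamma> (h(k := y)) k \<le> payoff N c R \<gamma> h k" using NEopt kN y by simp
      then show "\<phi> y \<le> \<phi> (h k)" using pay[OF y] pay0 by simp
    qed
    have BH: "B + h k = Ht" unfolding B_def by simp
    have "R*B = (c k + \<gamma>*h k) * Ht^2" using z Htpos unfolding BH by (simp add: field_simps)
    then show ?thesis unfolding B_def by (simp add: algebra_simps power2_eq_square)
  qed
  have "Ht * (R + \<gamma>*Ht^2) = (\<Sum>k=1..n. h k * (R + \<gamma>*Ht^2))"
    by (simp only: sum_distrib_right[symmetric] Ht_n[symmetric])
  also have "\<dots> = (\<Sum>k=1..n. Ht * (R - c k * Ht))" by (rule sum.cong) (use foc in auto)
  also have "\<dots> = Ht * (real n * R - S * Ht)"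
    by (simp add: sum_distrib_left[symmetric] sum_subtractf S_def sum_distrib_right)
  finally have "Ht * (R + \<gamma>*Ht^2) = Ht * (real n * R - S * Ht)" .
  then have e: "R + \<gamma>*Ht^2 = real n * R - S*Ht" using Htpos by simp
  have "(real n - 1)*R = real n*R - R" by (simp add: left_diff_distrib)
  then have quad: "\<gamma>*Ht^2 + S*Ht = (real n - 1)*R" using e by (simp add: algebra_simps)
  have Heq: "gH n c \<gamma> R = H" using H_def by simp
  have HtH: "Ht = H"
  proof (cases "\<gamma> = 0")
    case True
    then have "H = (real n - 1) * R / S" unfolding H_def gH_def Let_def S_def[symmetric] by simp
    moreover have "S*Ht = (real n - 1)*R" using quad True by simp
    then have "Ht = (real n - 1)*R/S" using Spos by (simp add: field_simps)
    ultimately show ?thesis by simp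
  next
    case False
    have sq: "sqrt (S^2 + 4 * (real n - 1) * R * \<gamma>) = 2*\<gamma>*Ht + S"
    proof (rule real_sqrt_unique)
      show "(2*\<gamma>*Ht + S)^2 = S^2 + 4 * (real n - 1) * R * \<gamma>"
      proof -
        have "(2*\<gamma>*Ht + S)^2 = S^2 + 4*\<gamma>*(\<gamma>*Ht^2 + S*Ht)" by (simp add: power2_eq_square algebra_simps)
        also have "\<dots> = S^2 + 4*\<gamma>*((real n - 1)*R)" unfolding quad ..
        finally show ?thesis by (simp add: ac_simps)
      qed
      show "0 \<le> 2*\<gamma>*Ht + S" using g Htpos Spos by simp
    qed
    have "H = (sqrt (S^2 + 4 * (real n - 1) * R * \<gamma>) - S) / (2 * \<gamma>)"
      unfolding H_def gH_def Let_def S_def[symmetric] using False by simp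
    then show ?thesis unfolding sq using False by simp
  qed
  have Hpos: "0 < H" using HtH Htpos by simp
  have key: "c i * H < R"
  proof -
    have "0 < h i * (R + \<gamma>*Ht^2)" using hpos[OF i] den_pos[OF R g] by simp
    then have "0 < Ht * (R - c i * Ht)" using foc[OF i] by simp
    then have "0 < R - c i * Ht" using Htpos by (simp add: zero_less_mult_iff)
    then show ?thesis using HtH by simp
  qed
  have quadH: "\<gamma>*H^2 + S*H = (real n - 1)*R" using quad HtH by simp
  define Dn where "Dn = R + \<gamma>*H^2"
  have Dn: "0 < Dn" unfolding Dn_def using den_pos[OF R g] .
  define T where "T = 2*\<gamma>*H + S"
  have T: "0 < T" unfolding T_def using g Hpos Spos by (simp add: add_nonneg_pos)
  define gp where "gp = - H / T"
  have gp: "gp < 0" unfolding gp_def using Hpos T by simp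
  have n1: "1 \<le> n" using n2 by simp
  have gdi: "((\<lambda>t. gH n (c(i:=t)) \<gamma> R) has_real_derivative gp) (at (c i))"
    using gH_deriv[OF i S_def Spos g R n1] unfolding Heq gp_def T_def .
  have gdj: "((\<lambda>t. gH n (c(j:=t)) \<gamma> R) has_real_derivative gp) (at (c j))"
    using gH_deriv[OF j S_def Spos g R n1] unfolding Heq gp_def T_def .
  have Xi: "gH n (c(i := c i)) \<gamma> R = H" using Heq by simp
  have Xj: "gH n (c(j := c j)) \<gamma> R = H" using Heq by simp
  have gdi': "deriv (\<lambda>t. gH n (c(i:=t)) \<gamma> R) (c i) = gp" using gdi by (rule DERIV_imp_deriv)
  have D1v: "D1 = - (H^2) / Dn"
  proof -
    have "((\<lambda>t. fh t \<gamma> R H) has_real_derivative (- (H^2)/(R+\<gamma>*H^2) + R*(R-\<gamma>*H^2-2*c i*H)/(R+\<gamma>*H^2)^2 * 0)) (at (c i))"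
      using comp1[of "\<lambda>t. H" 0 "c i" H R \<gamma>] R g by simp
    then have "deriv (\<lambda>t. fh t \<gamma> R H) (c i) = - (H^2) / Dn" unfolding Dn_def
      by (intro DERIV_imp_deriv) simp
    then show ?thesis unfolding D1_def Heq by simp
  qed
  define fx where "fx = R*(R-\<gamma>*H^2-2*c i*H)/Dn^2"
  have D2v: "D2 = fx * gp"
  proof -
    have "((\<lambda>x. fh (c i) \<gamma> R x) has_real_derivative (R*(R-\<gamma>*H^2-2*c i*H)/(R+\<gamma>*H^2)^2 * 1)) (at H)"
      using comp2[of "\<lambda>x. x" 1 H H R \<gamma> "c i"] R g by simp
    then have "deriv (\<lambda>x. fh (c i) \<gamma> R x) H = fx" unfolding fx_def Dn_def
      by (intro DERIV_imp_deriv) simp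
    then show ?thesis unfolding D2_def Heq gdi' by simp
  qed
  have E1v: "E1 = - H / Dn"
  proof -
    have "((\<lambda>t. fh t \<gamma> R H / H) has_real_derivative (- H/(R+\<gamma>*H^2) + (- c i*R + c i*\<gamma>*H^2 - 2*R*\<gamma>*H)/(R+\<gamma>*H^2)^2 * 0)) (at (c i))"
      using comp3[of "\<lambda>t. H" 0 "c i" H R \<gamma>] R g Hpos by simp
    then have "deriv (\<lambda>t. fh t \<gamma> R H / H) (c i) = - H / Dn" unfolding Dn_def
      by (intro DERIV_imp_deriv) simp
    then show ?thesis unfolding E1_def Heq by simp
  qed
  define ex where "ex = (- c i*R + c i*\<gamma>*H^2 - 2*R*\<gamma>*H)/Dn^2"
  have E2v: "E2 = ex * gp"
  proof -
    have "((\<lambda>x. fh (c i) \<gamma> R x / x) has_real_derivative ((- c i*R + c i*\<gamma>*H^2 - 2*R*\<gamma>*H)/(R+\<gamma>*H^2)^2 * 1)) (at H)"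
      using comp4[of "\<lambda>x. x" 1 H H R \<gamma> "c i"] R g Hpos by simp
    then have "deriv (\<lambda>x. fh (c i) \<gamma> R x / x) H = ex" unfolding ex_def Dn_def
      by (intro DERIV_imp_deriv) simp
    then show ?thesis unfolding E2_def Heq gdi' by simp
  qed
  have P1: "((\<lambda>t. fh t \<gamma> R (gH n (c(i := t)) \<gamma> R)) has_real_derivative D1 + D2) (at (c i))"
  proof -
    have e: "D1 + D2 = - (H^2)/(R+\<gamma>*H^2) + R*(R-\<gamma>*H^2-2*c i*H)/(R+\<gamma>*H^2)^2 * gp"
      unfolding D1v D2v fx_def Dn_def by simp
    show ?thesis unfolding e by (rule comp1[OF gdi Xi R g])
  qed
  have P3: "((\<lambda>t. fh (c i) \<gamma> R (gH n (c(j := t)) \<gamma> R)) has_real_derivative D2) (at (c j))"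
  proof -
    have e: "D2 = R*(R-\<gamma>*H^2-2*c i*H)/(R+\<gamma>*H^2)^2 * gp"
      unfolding D2v fx_def Dn_def by simp
    show ?thesis unfolding e by (rule comp2[OF gdj Xj R g])
  qed
  have P6: "((\<lambda>t. fh t \<gamma> R (gH n (c(i := t)) \<gamma> R) / gH n (c(i := t)) \<gamma> R) has_real_derivative E1 + E2) (at (c i))"
  proof -
    have e: "E1 + E2 = - H/(R+\<gamma>*H^2) + (- c i*R + c i*\<gamma>*H^2 - 2*R*\<gamma>*H)/(R+\<gamma>*H^2)^2 * gp"
      unfolding E1v E2v ex_def Dn_def by simp
    show ?thesis unfolding e by (rule comp3[OF gdi Xi R g]) (use Hpos in simp)
  qed
  have P8: "((\<lambda>t. fh (c i) \<gamma> R (gH n (c(j := t)) \<gamma> R) / gH n (c(j := t)) \<gamma> R) has_real_derivative E2) (at (c j))"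
  proof -
    have e: "E2 = (- c i*R + c i*\<gamma>*H^2 - 2*R*\<gamma>*H)/(R+\<gamma>*H^2)^2 * gp"
      unfolding E2v ex_def Dn_def by simp
    show ?thesis unfolding e by (rule comp4[OF gdj Xj R g]) (use Hpos in simp)
  qed
  define Q where "Q = R - \<gamma>*H^2 - 2*c i*H"
  define q where "q = \<gamma>*H^2"
  define p where "p = c i * H"
  have q0: "0 \<le> q" unfolding q_def using g by simp
  have cip: "0 < c i" using cpos[OF i] .
  have Dn2: "0 < Dn^2" using Dn by simp
  have S1: "D1 < 0" unfolding D1v using Hpos Dn by simp
  have S2: "D1 + D2 < 0"
  proof -
    define M where "M = - H*Dn*T - R*Q"
    have e: "D1 + D2 = H * M / (Dn^2 * T)"
      unfolding D1v D2v fx_def gp_def M_def Q_def using Dn T by (simp add: field_simps power2_eq_square)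
    have a1: "H*T = q + (real n - 1)*R" unfolding T_def q_def using quadH
      by (simp add: algebra_simps power2_eq_square)
    have nR: "R \<le> (real n - 1)*R" using n2 R by simp
    have a2: "Dn*(q + R) \<le> Dn*(q + (real n - 1)*R)" using nR Dn by simp
    have a3: "R*p < R*R" using key R unfolding p_def by simp
    have a4: "Dn*(q + R) = R*R + 2*(R*q) + q*q" unfolding Dn_def q_def by (simp add: algebra_simps)
    have a5: "0 \<le> q*q" by simp
    have a6: "0 \<le> R*q" using R q0 by simp
    have eM: "M = -(Dn*(q + (real n - 1)*R)) - R*R + R*q + 2*(R*p)"
    proof -
      have "M = -(Dn*(H*T)) - R*Q" unfolding M_def by (simp add: algebra_simps)
      also have "\<dots> = -(Dn*(q + (real n - 1)*R)) - R*R + R*q + 2*(R*p)"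
        unfolding a1 Q_def q_def p_def by (simp add: algebra_simps)
      finally show ?thesis .
    qed
    have "M < 0" using eM a2 a3 a4 a5 a6 by linarith
    then have "H * M < 0" using Hpos by (simp add: mult_pos_neg)
    moreover have "0 < Dn^2 * T" using Dn2 T by simp
    ultimately show ?thesis unfolding e by (simp add: divide_neg_pos)
  qed
  have S3: "D2 > 0 \<longleftrightarrow> fh (c i) \<gamma> R H / H < 1 / 2"
  proof -
    define k where "k = R * gp / Dn^2"
    have k: "k < 0" unfolding k_def using R gp Dn2 by (simp add: mult_pos_neg divide_neg_pos)
    have "D2 = Q * k" unfolding D2v fx_def k_def Q_def by simp
    then have A: "D2 > 0 \<longleftrightarrow> Q < 0" using k by (simp add: zero_less_mult_iff)
    have fq: "fh (c i) \<gamma> R H / H = (R - c i*H)/Dn" unfolding fh_def Dn_def using Hpos by simp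
    have B0: "(R - p)/Dn < 1/2 \<longleftrightarrow> R - p < 1/2 * Dn" using Dn by (simp add: pos_divide_less_eq)
    have B: "(R - c i*H)/Dn < 1/2 \<longleftrightarrow> Q < 0"
    proof -
      have "Q = R - q - 2*p" unfolding Q_def q_def p_def by simp
      moreover have "Dn = R + q" unfolding Dn_def q_def by simp
      ultimately show ?thesis using B0 unfolding p_def by linarith
    qed
    show ?thesis using A B fq by simp
  qed
  have S4: "E1 < 0" unfolding E1v using Hpos Dn by simp
  define num where "num = - c i*R + c i*\<gamma>*H^2 - 2*R*\<gamma>*H"
  have num: "num < 0"
  proof -
    have gH0: "0 \<le> \<gamma>*H" using g Hpos by simp
    have b1: "(\<gamma>*H)*p \<le> (\<gamma>*H)*R" using key gH0 unfolding p_def by (simp add: mult_left_mono)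
    have b2: "num = - c i*R + (\<gamma>*H)*p - 2*(R*(\<gamma>*H))" unfolding num_def p_def
      by (simp add: algebra_simps power2_eq_square)
    have b3: "0 < c i * R" using cip R by simp
    have b4: "0 \<le> R*(\<gamma>*H)" using R gH0 by simp
    show ?thesis using b1 b2 b3 b4 by (simp add: algebra_simps)
  qed
  have S5: "E2 > 0"
  proof -
    have "ex < 0" unfolding ex_def using num Dn2 num_def by (simp add: divide_neg_pos)
    then show ?thesis unfolding E2v using gp by (simp add: mult_neg_neg)
  qed
  have S6: "E1 + E2 < 0"
  proof -
    define M where "M = - Dn*T - num"
    have e: "E1 + E2 = H * M / (Dn^2 * T)"
      unfolding E1v E2v ex_def gp_def M_def num_def using Dn T by (simp add: field_simps power2_eq_square)
    have eM: "M = -(R*(S - c i)) - 2*(\<gamma>^2*H^3) - \<gamma>*H^2*(S + c i)"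
      unfolding M_def num_def Dn_def T_def by (simp add: algebra_simps power2_eq_square power3_eq_cube)
    have "0 < R*(S - c i)" using R Sgt by simp
    moreover have "0 \<le> \<gamma>^2*H^3" using Hpos by simp
    moreover have "0 \<le> \<gamma>*H^2*(S + c i)" using g Spos cip by simp
    ultimately have "M < 0" using eM by linarith
    then have "H * M < 0" using Hpos by (simp add: mult_pos_neg)
    moreover have "0 < Dn^2 * T" using Dn2 T by simp
    ultimately show ?thesis unfolding e by (simp add: divide_neg_pos)
  qed
  show ?thesis using P1 P3 P6 P8 S1 S2 S3 S4 S5 S6 by blast
qed
end
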